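(* Let $G$ be a connected graph with vertex set $\{u_1,\dots,u_n\}$, $n\ge2$, and let $\mathcal{H}=\{H_1,\dots,H_n\}$ be a family of connected graphs such that each $H_i$ either has radius $r(H_i)\ge4$, or is not a tree and has girth $\mathtt{g}(H_i)\ge7$. Then $$\dim_l(G\circ\mathcal{H})=\sum_{i=1}^n\dim_l(K_1+H_i)=\sum_{i=1}^n\operatorname{adim}_l(H_i).$$
   Context: All graphs are finite and simple. $d_G$ is shortest-path distance, $d_{G,2}=\min\{d_G,2\}$; $s$ distinguishes $x,y$ w.r.t. $d$ if $d(s,x)\ne d(s,y)$. $\dim_l(G)$ (connected $G$): minimum size of $S\subseteq V(G)$ such that any two adjacent vertices are distinguished w.r.t. $d_G$ by some vertex of $S$. $\operatorname{adim}_l(H)$: minimum size of $S\subseteq V(H)$ such that any two adjacent vertices are distinguished w.r.t. $d_{H,2}$ by some vertex of $S$. $K_1+H$: a new vertex joined to every vertex of $H$. Lexicographic product $G\circ\mathcal{H}$: vertex set $\bigcup_i\{u_i\}\times V(H_i)$, $(u_i,v)\sim(u_j,w)$ iff $u_iu_j\in E(G)$, or $i=j$ and $vw\in E(H_i)$. *)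

theory Defs
  imports Main "HOL-Library.Extended_Nat"
begin

record 'a graph =
  verts :: "'a set"
  edges :: "'a set set"

definition simple_graph :: "'a graph \<Rightarrow> bool" where
  "simple_graph G \<longleftrightarrow> finite (verts G) \<and>
     (\<forall>e\<in>edges G. \<exists>u v. e = {u, v} \<and> u \<noteq> v \<and> u \<in> verts G \<and> v \<in> verts G)"

definition adj :: "'a graph \<Rightarrow> 'a \<Rightarrow> 'a \<Rightarrow> bool" where
  "adj G u v \<longleftrightarrow> {u, v} \<in> edges G"

definition walk :: "'a graph \<Rightarrow> 'a list \<Rightarrow> bool" where
  "walk G xs \<longleftrightarrow> xs \<noteq> [] \<and> set xs \<subseteq> verts G \<and>
     (\<forall>i. Suc i < length xs \<longrightarrow> adj G (xs ! i) (xs ! Suc i))"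

definition connected :: "'a graph \<Rightarrow> bool" where
  "connected G \<longleftrightarrow> verts G \<noteq> {} \<and>
     (\<forall>u\<in>verts G. \<forall>v\<in>verts G. \<exists>xs. walk G xs \<and> hd xs = u \<and> last xs = v)"

(* shortest-path distance d_G (meaningful for connected G) *)
definition dist :: "'a graph \<Rightarrow> 'a \<Rightarrow> 'a \<Rightarrow> nat" where
  "dist G u v = (LEAST n. \<exists>xs. walk G xs \<and> hd xs = u \<and> last xs = v \<and> length xs = Suc n)"

definition dist2 :: "'a graph \<Rightarrow> 'a \<Rightarrow> 'a \<Rightarrow> nat" where
  "dist2 G u v = min (dist G u v) 2"

definition local_gen :: "('a \<Rightarrow> 'a \<Rightarrow> nat) \<Rightarrow> 'a graph \<Rightarrow> 'a set \<Rightarrow> bool" where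
  "local_gen d G S \<longleftrightarrow> S \<subseteq> verts G \<and>
     (\<forall>x\<in>verts G. \<forall>y\<in>verts G. adj G x y \<longrightarrow> (\<exists>s\<in>S. d s x \<noteq> d s y))"

definition dim_l :: "'a graph \<Rightarrow> nat" where
  "dim_l G = (LEAST k. \<exists>S. local_gen (dist G) G S \<and> card S = k)"

definition adim_l :: "'a graph \<Rightarrow> nat" where
  "adim_l G = (LEAST k. \<exists>S. local_gen (dist2 G) G S \<and> card S = k)"

(* K_1 + H : the new vertex is None, old vertices are Some v *)
definition join1 :: "'a graph \<Rightarrow> 'a option graph" where
  "join1 H = \<lparr> verts = insert None (Some ` verts H),
               edges = ((\<lambda>e. Some ` e) ` edges H) \<union> {{None, Some v} | v. v \<in> verts H} \<rparr>"

(* lexicographic product G \<circ> H, the family H indexed by the vertices of G *)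
definition lex_prod :: "'a graph \<Rightarrow> ('a \<Rightarrow> 'b graph) \<Rightarrow> ('a \<times> 'b) graph" where
  "lex_prod G H = \<lparr> verts = Sigma (verts G) (\<lambda>u. verts (H u)),
     edges = {{(u, x), (w, y)} | u x w y.
                u \<in> verts G \<and> w \<in> verts G \<and> x \<in> verts (H u) \<and> y \<in> verts (H w) \<and>
                (adj G u w \<or> (u = w \<and> adj (H u) x y))} \<rparr>"

definition ecc :: "'a graph \<Rightarrow> 'a \<Rightarrow> nat" where
  "ecc G v = Max (dist G v ` verts G)"

definition radius :: "'a graph \<Rightarrow> nat" where
  "radius G = Min (ecc G ` verts G)"

definition cycle :: "'a graph \<Rightarrow> 'a list \<Rightarrow> bool" where
  "cycle G c \<longleftrightarrow> length c \<ge> 3 \<and> distinct c \<and> walk G c \<and> adj G (last c) (hd c)"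

definition is_tree :: "'a graph \<Rightarrow> bool" where
  "is_tree G \<longleftrightarrow> connected G \<and> \<not> (\<exists>c. cycle G c)"

(* girth: length of a shortest cycle, infinity if acyclic *)
definition girth :: "'a graph \<Rightarrow> enat" where
  "girth G = (INF c \<in> {c. cycle G c}. enat (length c))"

end

theory Submission
  imports Defs
begin

lemma walk_nonempty: "walk G xs \<Longrightarrow> xs \<noteq> []"
  by (simp add: walk_def)

lemma walk_single[simp]: "walk G [a] \<longleftrightarrow> a \<in> verts G"
  by (auto simp: walk_def)

lemma walk_Cons2[simp]: "walk G (a # b # xs) \<longleftrightarrow> a \<in> verts G \<and> adj G a b \<and> walk G (b # xs)"
proof
  assume w: "walk G (a # b # xs)"
  then have A: "\<forall>i. Suc i < length (a#b#xs) \<longrightarrow> adj G ((a#b#xs)!i) ((a#b#xs)!Suc i)"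
    by (simp add: walk_def)
  have "adj G a b" using A[rule_format, of 0] by simp
  moreover have "walk G (b # xs)"
    unfolding walk_def
  proof (intro conjI allI impI)
    show "set (b # xs) \<subseteq> verts G" using w by (simp add: walk_def)
    fix i assume "Suc i < length (b # xs)"
    then show "adj G ((b # xs) ! i) ((b # xs) ! Suc i)" using A[rule_format, of "Suc i"] by simp
  qed simp
  ultimately show "a \<in> verts G \<and> adj G a b \<and> walk G (b # xs)" using w by (simp add: walk_def)
next
  assume h: "a \<in> verts G \<and> adj G a b \<and> walk G (b # xs)"
  show "walk G (a # b # xs)"
    unfolding walk_def
  proof (intro conjI allI impI)
    show "set (a # b # xs) \<subseteq> verts G" using h by (simp add: walk_def)
    fix i assume i: "Suc i < length (a # b # xs)"
    show "adj G ((a # b # xs) ! i) ((a # b # xs) ! Suc i)"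
    proof (cases i)
      case 0 then show ?thesis using h by simp
    next
      case (Suc j)
      then show ?thesis using h i unfolding walk_def by auto
    qed
  qed simp
qed

lemma walk_append:
  "xs \<noteq> [] \<Longrightarrow> ys \<noteq> [] \<Longrightarrow> walk G (xs @ ys) \<longleftrightarrow> walk G xs \<and> walk G ys \<and> adj G (last xs) (hd ys)"
proof (induction xs)
  case Nil then show ?case by simp
next
  case (Cons a xs)
  show ?case
  proof (cases xs)
    case Nil
    then show ?thesis using Cons.prems by (cases ys) auto
  next
    case (Cons b zs)
    then show ?thesis using Cons.IH Cons.prems by auto
  qed
qed

lemma walk_join:
  assumes "walk G xs" "walk G ys" "last xs = hd ys"
  shows "walk G (xs @ tl ys) \<and> hd (xs @ tl ys) = hd xs \<and> last (xs @ tl ys) = last ys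
     \<and> length (xs @ tl ys) = length xs + length ys - 1"
proof -
  have xne: "xs \<noteq> []" using walk_nonempty[OF assms(1)] .
  obtain c r where ys: "ys = c # r" using walk_nonempty[OF assms(2)] by (cases ys) auto
  show ?thesis
  proof (cases r)
    case Nil
    then show ?thesis using assms xne ys by simp
  next
    case (Cons d r')
    have w: "walk G (d # r')" "adj G c d" using assms(2) ys Cons by auto
    have "walk G (xs @ d # r')" using walk_append[OF xne, of "d # r'" G] w assms(1,3) ys by simp
    then show ?thesis using ys Cons xne by simp
  qed
qed

lemma walk_butlast:
  assumes "walk G xs" "length xs \<ge> 2"
  shows "walk G (butlast xs) \<and> adj G (last (butlast xs)) (last xs) \<and> butlast xs \<noteq> []
     \<and> hd (butlast xs) = hd xs"
proof -
  have ne: "butlast xs \<noteq> []" using assms(2) by (cases xs) auto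
  have "walk G (butlast xs @ [last xs])" using assms(1) walk_nonempty[OF assms(1)] by simp
  then have "walk G (butlast xs) \<and> adj G (last (butlast xs)) (last xs)"
    using walk_append[OF ne, of "[last xs]" G] by simp
  moreover have "hd (butlast xs) = hd xs" using ne by (cases xs) auto
  ultimately show ?thesis using ne by simp
qed

lemma dist_le: "walk G xs \<Longrightarrow> hd xs = u \<Longrightarrow> last xs = v \<Longrightarrow> dist G u v \<le> length xs - 1"
proof -
  assume a: "walk G xs" "hd xs = u" "last xs = v"
  then have "length xs = Suc (length xs - 1)" using walk_nonempty[OF a(1)] by simp
  then have "\<exists>ys. walk G ys \<and> hd ys = u \<and> last ys = v \<and> length ys = Suc (length xs - 1)"
    using a by blast
  then show ?thesis unfolding dist_def by (rule Least_le)
qed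

lemma dist_self: "u \<in> verts G \<Longrightarrow> dist G u u = 0"
  using dist_le[of G "[u]" u u] by simp

lemma walk_lip:
  assumes "walk G xs" "\<And>p q. adj G p q \<Longrightarrow> p \<in> verts G \<Longrightarrow> q \<in> verts G \<Longrightarrow> D q \<le> D p + (1::nat)"
  shows "D (last xs) \<le> D (hd xs) + (length xs - 1)"
  using assms(1)
proof (induction xs)
  case Nil then show ?case by (simp add: walk_def)
next
  case (Cons a xs)
  show ?case
  proof (cases xs)
    case Nil then show ?thesis by simp
  next
    case (Cons b zs)
    have w: "walk G (a # b # zs)" using Cons.prems Cons by simp
    then have "walk G (b#zs)" "adj G a b" "a \<in> verts G" "b \<in> verts G"
      by (auto simp: walk_def)
    moreover have "D (last (b#zs)) \<le> D b + (length (b#zs) - 1)" using Cons.IH Cons \<open>walk G (b#zs)\<close> by simp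
    moreover have "D b \<le> D a + 1" using assms(2)[of a b] calculation by simp
    ultimately show ?thesis using Cons by simp
  qed
qed

lemma dist_ge_lip:
  assumes "walk G xs" "hd xs = u" "last xs = v" "D u = (0::nat)"
    "\<And>p q. adj G p q \<Longrightarrow> p \<in> verts G \<Longrightarrow> q \<in> verts G \<Longrightarrow> D q \<le> D p + 1"
  shows "D v \<le> dist G u v"
proof -
  have ex: "\<exists>n ys. walk G ys \<and> hd ys = u \<and> last ys = v \<and> length ys = Suc n"
  proof -
    have "length xs = Suc (length xs - 1)" using walk_nonempty[OF assms(1)] by simp
    then show ?thesis using assms(1-3) by blast
  qed
  have "\<exists>ys. walk G ys \<and> hd ys = u \<and> last ys = v \<and> length ys = Suc (dist G u v)"
    unfolding dist_def by (rule LeastI_ex[OF ex])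
  then obtain ys where ys: "walk G ys" "hd ys = u" "last ys = v" "length ys = Suc (dist G u v)" by blast
  moreover have "D (last ys) \<le> D (hd ys) + (length ys - 1)"
    by (rule walk_lip[OF \<open>walk G ys\<close>]) (rule assms(5))
  ultimately show ?thesis using assms(4) by simp
qed

lemma dist_walk_gen:
  assumes "walk G xs" "hd xs = u" "last xs = v"
  shows "\<exists>ys. walk G ys \<and> hd ys = u \<and> last ys = v \<and> length ys = Suc (dist G u v)"
proof -
  have ex: "\<exists>n ys. walk G ys \<and> hd ys = u \<and> last ys = v \<and> length ys = Suc n"
  proof -
    have "length xs = Suc (length xs - 1)" using walk_nonempty[OF assms(1)] by simp
    then show ?thesis using assms(1-3) by blast
  qed
  show ?thesis unfolding dist_def by (rule LeastI_ex[OF ex])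
qed

lemma adj_sym: "adj G u v \<longleftrightarrow> adj G v u"
  by (simp add: adj_def insert_commute)

locale sg =
  fixes G :: "'a graph"
  assumes simple: "simple_graph G" and conn: "connected G"
begin

lemma finV: "finite (verts G)" using simple by (simp add: simple_graph_def)
lemma neV: "verts G \<noteq> {}" using conn by (simp add: connected_def)

lemma adj_verts: assumes "adj G u v" shows "u \<in> verts G" "v \<in> verts G" "u \<noteq> v"
proof -
  obtain a b where "{u,v} = {a,b}" "a \<noteq> b" "a \<in> verts G" "b \<in> verts G"
    using simple assms unfolding simple_graph_def adj_def by blast
  then show "u \<in> verts G" "v \<in> verts G" "u \<noteq> v" by (auto simp: doubleton_eq_iff)
qed

lemma walk_ex: "u \<in> verts G \<Longrightarrow> v \<in> verts G \<Longrightarrow> \<exists>xs. walk G xs \<and> hd xs = u \<and> last xs = v"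
  using conn unfolding connected_def by blast

lemma dist_walk: "u \<in> verts G \<Longrightarrow> v \<in> verts G \<Longrightarrow>
   \<exists>ys. walk G ys \<and> hd ys = u \<and> last ys = v \<and> length ys = Suc (dist G u v)"
  using walk_ex dist_walk_gen by metis

lemma dist_0: assumes "u \<in> verts G" "v \<in> verts G" "dist G u v = 0" shows "u = v"
proof -
  obtain ys where "walk G ys" "hd ys = u" "last ys = v" "length ys = Suc 0"
    using dist_walk[OF assms(1,2)] assms(3) by auto
  then show ?thesis by (cases ys) auto
qed

lemma dist_adj: assumes "adj G u v" shows "dist G u v = 1"
proof -
  have "dist G u v \<le> 1" using dist_le[of G "[u,v]" u v] adj_verts[OF assms] assms by simp
  moreover have "dist G u v \<noteq> 0" using dist_0 adj_verts[OF assms] by blast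
  ultimately show ?thesis by simp
qed

lemma dist_one: assumes "u \<in> verts G" "v \<in> verts G" "dist G u v = 1" shows "adj G u v"
proof -
  obtain ys where ys: "walk G ys" "hd ys = u" "last ys = v" "length ys = Suc (Suc 0)"
    using dist_walk[OF assms(1,2)] assms(3) by auto
  then obtain a b where "ys = [a,b]"
    by (metis Suc_length_conv length_0_conv)
  then show ?thesis using ys by simp
qed

lemma dist_tri: assumes "u \<in> verts G" "v \<in> verts G" "w \<in> verts G"
  shows "dist G u w \<le> dist G u v + dist G v w"
proof -
  obtain xs where xs: "walk G xs" "hd xs = u" "last xs = v" "length xs = Suc (dist G u v)"
    using dist_walk[OF assms(1,2)] by blast
  obtain ys where ys: "walk G ys" "hd ys = v" "last ys = w" "length ys = Suc (dist G v w)"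
    using dist_walk[OF assms(2,3)] by blast
  have j: "walk G (xs @ tl ys) \<and> hd (xs @ tl ys) = hd xs \<and> last (xs @ tl ys) = last ys
     \<and> length (xs @ tl ys) = length xs + length ys - 1"
    using walk_join[OF xs(1) ys(1)] xs ys by simp
  then show ?thesis using dist_le[of G "xs @ tl ys" u w] xs ys by simp
qed

lemma dist_lip: assumes "adj G v w" "u \<in> verts G" shows "dist G u w \<le> dist G u v + 1"
  using dist_tri[OF assms(2) adj_verts(1,2)[OF assms(1)]] dist_adj[OF assms(1)] by simp

lemma dist2_lip: assumes "adj G y y'" "z \<in> verts G" shows "dist2 G z y' \<le> dist2 G z y + 1"
  using dist_lip[OF assms] unfolding dist2_def by simp

lemma dist2_neq1: assumes "z \<in> verts G" "x \<in> verts G" "\<not> adj G x z" shows "dist2 G z x \<noteq> 1"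
proof
  assume "dist2 G z x = 1"
  then have "dist G z x = 1" by (simp add: dist2_def min_def split: if_splits)
  then have "adj G z x" using dist_one assms by blast
  then show False using assms(3) adj_sym by metis
qed

lemma dist2_self: "z \<in> verts G \<Longrightarrow> dist2 G z z = 0"
  by (simp add: dist2_def dist_self)

lemma dist2_adj: "adj G z x \<Longrightarrow> dist2 G z x = 1"
  by (simp add: dist2_def dist_adj)

lemma dist2_far: assumes "z \<in> verts G" "x \<in> verts G" "z \<noteq> x" "\<not> adj G z x" shows "dist2 G z x = 2"
proof -
  have "dist G z x \<noteq> 0" using dist_0 assms by blast
  moreover have "dist G z x \<noteq> 1" using dist_one assms by blast
  ultimately show ?thesis by (simp add: dist2_def)
qed

lemma parent: assumes "x \<in> verts G" "w \<in> verts G" "dist G x w = Suc m"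
  shows "\<exists>p. adj G p w \<and> dist G x p = m \<and> p \<in> verts G"
proof -
  obtain xs where xs: "walk G xs" "hd xs = x" "last xs = w" "length xs = Suc (Suc m)"
    using dist_walk[OF assms(1,2)] assms(3) by auto
  have b: "walk G (butlast xs) \<and> adj G (last (butlast xs)) (last xs) \<and> butlast xs \<noteq> []
     \<and> hd (butlast xs) = hd xs" using walk_butlast[OF xs(1)] xs(4) by simp
  define p where "p = last (butlast xs)"
  have "dist G x p \<le> m" using dist_le[of G "butlast xs" x p] b xs p_def by simp
  moreover have "dist G x w \<le> dist G x p + 1" using dist_lip[of p w x] b xs p_def assms by simp
  ultimately show ?thesis using b xs p_def assms(3) adj_verts by auto
qed

lemma cycle_nbrs: assumes "cycle G c" "v \<in> set c"
  shows "\<exists>a b. a \<in> set c \<and> b \<in> set c \<and> a \<noteq> b \<and> a \<noteq> v \<and> b \<noteq> v \<and> adj G v a \<and> adj G b v"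
proof -
  define n where "n = length c"
  have n3: "n \<ge> 3" and dc: "distinct c" and wc: "walk G c" and lh: "adj G (last c) (hd c)"
    using assms(1) unfolding cycle_def n_def by auto
  have A1: "\<And>j. Suc j < n \<Longrightarrow> adj G (c!j) (c!Suc j)" using wc unfolding walk_def n_def by auto
  have A2: "adj G (c!(n-1)) (c!0)" using lh n3 unfolding n_def
    by (metis hd_conv_nth last_conv_nth list.size(3) not_numeral_le_zero)
  obtain i where i: "i < n" "c!i = v" using assms(2) unfolding n_def by (metis in_set_conv_nth)
  have D: "\<And>j k. j < n \<Longrightarrow> k < n \<Longrightarrow> c!j = c!k \<longleftrightarrow> j = k"
    using dc nth_eq_iff_index_eq n_def by blast
  have S: "\<And>j. j < n \<Longrightarrow> c!j \<in> set c" unfolding n_def by simp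
  show ?thesis
  proof (cases "i = 0")
    case True
    show ?thesis
      apply (rule exI[of _ "c!1"], rule exI[of _ "c!(n-1)"])
      using A1[of 0] A2 True i n3 D[of 1 "n-1"] D[of 1 0] D[of "n-1" 0] S[of 1] S[of "n-1"] by auto
  next
    case False
    show ?thesis
    proof (cases "i = n - 1")
      case True
      show ?thesis
        apply (rule exI[of _ "c!0"], rule exI[of _ "c!(n-2)"])
        using A1[of "n-2"] A2 True i n3 D[of 0 "n-2"] D[of 0 "n-1"] D[of "n-2" "n-1"] S[of 0] S[of "n-2"]
        by (auto simp: Suc_diff_Suc numeral_2_eq_2)
    next
      case F2: False
      show ?thesis
        apply (rule exI[of _ "c!(i+1)"], rule exI[of _ "c!(i-1)"])
        using A1[of i] A1[of "i-1"] False F2 i n3 D[of "i+1" "i-1"] D[of "i+1" i] D[of "i-1" i] S[of "i+1"] S[of "i-1"]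
        by auto
    qed
  qed
qed

lemma far_edge:
  assumes gen: "local_gen (dist2 G) G S" and sub: "S \<subseteq> {z. adj G x z}" and x: "x \<in> verts G"
    and ab: "adj G a b" and da: "dist G x a \<ge> 3" and db: "dist G x b \<ge> 3"
  shows False
proof -
  have a: "a \<in> verts G" and b: "b \<in> verts G" using adj_verts[OF ab] by auto
  obtain s where s: "s \<in> S" "dist2 G s a \<noteq> dist2 G s b" using gen a b ab unfolding local_gen_def by blast
  have xs: "adj G x s" using s sub by auto
  have sV: "s \<in> verts G" using adj_verts[OF xs] by auto
  have "dist G x a \<le> dist G x s + dist G s a" by (rule dist_tri[OF x sV a])
  then have "dist G s a \<ge> 2" using da dist_adj[OF xs] by simp
  moreover have "dist G x b \<le> dist G x s + dist G s b" by (rule dist_tri[OF x sV b])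
  then have "dist G s b \<ge> 2" using db dist_adj[OF xs] by simp
  ultimately show False using s(2) unfolding dist2_def by simp
qed

lemma KL_radius:
  assumes gen: "local_gen (dist2 G) G S" and sub: "S \<subseteq> {z. adj G x z}" and x: "x \<in> verts G"
    and r: "radius G \<ge> 4"
  shows False
proof -
  have "radius G \<le> ecc G x" unfolding radius_def using finV x by (intro Min_le) auto
  moreover have "ecc G x \<in> dist G x ` verts G" unfolding ecc_def using finV neV by (intro Max_in) auto
  ultimately obtain y where y: "y \<in> verts G" "dist G x y \<ge> 4" using r by (auto simp: ecc_def)
  then obtain m where m: "dist G x y = Suc m" "m \<ge> 3" by (metis Suc_le_D Suc_le_mono numeral_eq_Suc pred_numeral_simps(2) semiring_norm(26) semiring_norm(27))
  obtain p where p: "adj G p y" "dist G x p = m" using parent[OF x y(1) m(1)] by blast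
  show False using far_edge[OF gen sub x p(1)] p m y by simp
qed

lemma KL_girth:
  assumes gen: "local_gen (dist2 G) G S" and sub: "S \<subseteq> {z. adj G x z}" and x: "x \<in> verts G"
    and nc: "\<And>c. cycle G c \<Longrightarrow> 7 \<le> length c" and cyc: "cycle G c"
  shows False
proof -
  have cV: "set c \<subseteq> verts G" using cyc unfolding cycle_def walk_def by auto
  have cne: "set c \<noteq> {}" using cyc unfolding cycle_def by auto
  define k where "k = Max (dist G x ` set c)"
  have "k \<in> dist G x ` set c" unfolding k_def using cne by (intro Max_in) auto
  then obtain v where v: "v \<in> set c" "dist G x v = k" by auto
  have vmax: "\<And>w. w \<in> set c \<Longrightarrow> dist G x w \<le> k" unfolding k_def by simp
  obtain a b where ab: "a \<in> set c" "b \<in> set c" "a \<noteq> b" "a \<noteq> v" "b \<noteq> v" "adj G v a" "adj G b v"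
    using cycle_nbrs[OF cyc v(1)] by blast
  have V: "v \<in> verts G" "a \<in> verts G" "b \<in> verts G" using ab v cV by auto
  have dx: "dist G x x = 0" using dist_self x by metis
  have d1: "\<And>p. p \<in> verts G \<Longrightarrow> dist G x p = 1 \<Longrightarrow> adj G x p" using dist_one x by blast
  have F: "\<And>p q. adj G p q \<Longrightarrow> dist G x p \<ge> 3 \<Longrightarrow> dist G x q \<ge> 3 \<Longrightarrow> False"
    using far_edge[OF gen sub x] by blast
  have L1: "\<And>p q. adj G p q \<Longrightarrow> dist G x p = 1 \<Longrightarrow> dist G x q = 1 \<Longrightarrow> False"
  proof -
    fix p q assume pq: "adj G p q" "dist G x p = 1" "dist G x q = 1"
    have pV: "p \<in> verts G" "q \<in> verts G" "p \<noteq> q" using adj_verts[OF pq(1)] by auto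
    have "adj G x p" "adj G x q" using d1 pV pq by auto
    then have "cycle G [x,p,q]" using pq pV x dx adj_sym[of G q x] by (auto simp: cycle_def)
    then show False using nc by fastforce
  qed
  have L2: "\<And>p q. adj G p q \<Longrightarrow> dist G x p = 2 \<Longrightarrow> dist G x q = 2 \<Longrightarrow> False"
  proof -
    fix p q assume pq: "adj G p q" "dist G x p = 2" "dist G x q = 2"
    have pV: "p \<in> verts G" "q \<in> verts G" "p \<noteq> q" using adj_verts[OF pq(1)] by auto
    obtain pp where pp: "adj G pp p" "dist G x pp = 1" "pp \<in> verts G"
      using parent[OF x pV(1), of 1] pq by auto
    obtain pq' where pq': "adj G pq' q" "dist G x pq' = 1" "pq' \<in> verts G"
      using parent[OF x pV(2), of 1] pq by auto
    show False
    proof (cases "pp = pq'")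
      case True
      then have "cycle G [pp,p,q]" using pq pV pp pq' adj_sym[of G q pp] by (auto simp: cycle_def)
      then show False using nc by fastforce
    next
      case False
      have "adj G x pp" "adj G x pq'" using d1 pp pq' by auto
      then have "cycle G [x,pp,p,q,pq']" using False pq pV pp pq' x dx adj_sym[of G q pq'] adj_sym[of G pq' x]
        by (auto simp: cycle_def)
      then show False using nc by fastforce
    qed
  qed
  have lipa: "dist G x v \<le> dist G x a + 1" using dist_lip[of a v x] ab adj_sym x by metis
  have lipb: "dist G x v \<le> dist G x b + 1" using dist_lip[of b v x] ab x by metis
  have ka: "dist G x a \<le> k" "dist G x b \<le> k" using vmax ab by auto
  show False
  proof (cases "k \<ge> 4")
    case True
    then show False using F[OF ab(6)] v lipa by simp
  next
    case False
    then consider "k = 0" | "k = 1" | "k = 2" | "k = 3" by linarith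
    then show False
    proof cases
      case 1
      then have "a = x" "v = x" using dist_0[OF x] V ka v by auto
      then show False using ab by simp
    next
      case 2
      show False
      proof (cases "dist G x a = 1")
        case True then show False using L1[OF ab(6)] v 2 by simp
      next
        case Fa: False
        show False
        proof (cases "dist G x b = 1")
          case True then show False using L1[OF ab(7)] v 2 by simp
        next
          case False
          then have "dist G x a = 0" "dist G x b = 0" using Fa ka 2 by auto
          then have "a = x" "b = x" using dist_0[OF x] V by auto
          then show False using ab by simp
        qed
      qed
    next
      case 3
      show False
      proof (cases "dist G x a = 2")
        case True then show False using L2[OF ab(6)] v 3 by simp
      next
        case Fa: False
        show False
        proof (cases "dist G x b = 2")
          case True then show False using L2[OF ab(7)] v 3 by simp
        next
          case False
          then have da: "dist G x a = 1" "dist G x b = 1" using Fa ka lipa lipb 3 v by auto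
          have "adj G x a" "adj G x b" using d1 da V by auto
          then have "cycle G [x,a,v,b]" using ab V x dx da v 3 adj_sym[of G a v] adj_sym[of G b x] adj_sym[of G v b]
            by (auto simp: cycle_def)
          then show False using nc by fastforce
        qed
      qed
    next
      case 4
      show False
      proof (cases "dist G x a \<ge> 3")
        case True then show False using F[OF ab(6)] v 4 by simp
      next
        case Fa: False
        show False
        proof (cases "dist G x b \<ge> 3")
          case True then show False using F[OF ab(7)] v 4 by simp
        next
          case False
          then have da: "dist G x a = 2" "dist G x b = 2" using Fa ka lipa lipb 4 v by auto
          obtain pa where pa: "adj G pa a" "dist G x pa = 1" "pa \<in> verts G"
            using parent[OF x V(2), of 1] da by auto
          obtain pb where pb: "adj G pb b" "dist G x pb = 1" "pb \<in> verts G"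
            using parent[OF x V(3), of 1] da by auto
          show False
          proof (cases "pa = pb")
            case True
            then have "cycle G [pa,a,v,b]" using ab V da v 4 pa pb adj_sym[of G a v] adj_sym[of G pb b] adj_sym[of G v b]
              by (auto simp: cycle_def)
            then show False using nc by fastforce
          next
            case False
            have "adj G x pa" "adj G x pb" using d1 pa pb by auto
            then have "cycle G [x,pa,a,v,b,pb]" using False ab V x dx da v 4 pa pb adj_sym[of G a v]
                adj_sym[of G pb x] adj_sym[of G v b] adj_sym[of G b pb] by (auto simp: cycle_def)
            then show False using nc by fastforce
          qed
        qed
      qed
    qed
  qed
qed

lemma KL:
  assumes cond: "radius G \<ge> 4 \<or> (\<not> is_tree G \<and> girth G \<ge> 7)"
    and gen: "local_gen (dist2 G) G S" and x: "x \<in> verts G"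
  shows "\<exists>z\<in>S. \<not> adj G x z"
proof (rule ccontr)
  assume "\<not> ?thesis"
  then have sub: "S \<subseteq> {z. adj G x z}" by auto
  show False
  proof (cases "radius G \<ge> 4")
    case True then show False using KL_radius[OF gen sub x] by simp
  next
    case False
    then have nt: "\<not> is_tree G" and g: "girth G \<ge> 7" using cond by auto
    obtain c where c: "cycle G c" using nt conn unfolding is_tree_def by blast
    have nc: "7 \<le> length c" if "cycle G c" for c
    proof -
      have "girth G \<le> enat (length c)" unfolding girth_def using that by (intro INF_lower) auto
      then have "(7::enat) \<le> enat (length c)" using g by (rule order_trans[rotated])
      then show ?thesis by (simp add: numeral_eq_enat)
    qed
    show False using KL_girth[OF gen sub x nc c] by blast
  qed
qed

end

lemma walk_map:
  assumes "walk G ws" "\<And>a. a \<in> verts G \<Longrightarrow> f a \<in> verts G'"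
    "\<And>a b. adj G a b \<Longrightarrow> a \<in> verts G \<Longrightarrow> b \<in> verts G \<Longrightarrow> adj G' (f a) (f b)"
  shows "walk G' (map f ws)"
  using assms(1)
proof (induction ws)
  case Nil then show ?case by (simp add: walk_def)
next
  case (Cons a ws)
  show ?case
  proof (cases ws)
    case Nil then show ?thesis using Cons.prems assms(2) by simp
  next
    case (Cons b zs)
    have "walk G (a # b # zs)" using Cons.prems Cons by simp
    then have "walk G (b#zs)" "adj G a b" "a \<in> verts G" "b \<in> verts G"
      by (auto simp: walk_def)
    moreover have "walk G' (map f (b#zs))" using Cons.IH Cons calculation by simp
    ultimately show ?thesis using Cons assms(2,3) by simp
  qed
qed

lemma verts_lex: "verts (lex_prod G H) = Sigma (verts G) (\<lambda>u. verts (H u))"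
  by (simp add: lex_prod_def)

lemma adj_lex: "adj (lex_prod G H) (u,x) (w,y) \<longleftrightarrow>
   (u \<in> verts G \<and> w \<in> verts G \<and> x \<in> verts (H u) \<and> y \<in> verts (H w) \<and>
    (adj G u w \<or> (u = w \<and> adj (H u) x y)))"
  unfolding adj_def lex_prod_def by (auto simp: doubleton_eq_iff insert_commute)

lemma Some_img_eq: "Some ` e = {Some x, Some y} \<longleftrightarrow> e = {x, y}"
  by (metis image_empty image_insert inj_Some inj_image_eq_iff)

lemma verts_join1: "verts (join1 H) = insert None (Some ` verts H)"
  by (simp add: join1_def)

lemma adj_join1_SS: "adj (join1 H) (Some x) (Some y) \<longleftrightarrow> adj H x y"
proof -
  have "{Some x, Some y} \<in> (\<lambda>e. Some ` e) ` edges H \<longleftrightarrow> {x,y} \<in> edges H"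
  proof
    assume "{Some x, Some y} \<in> (\<lambda>e. Some ` e) ` edges H"
    then obtain e where "e \<in> edges H" "{Some x, Some y} = Some ` e" by blast
    then show "{x,y} \<in> edges H" using Some_img_eq by metis
  next
    assume "{x,y} \<in> edges H"
    then show "{Some x, Some y} \<in> (\<lambda>e. Some ` e) ` edges H"
      by (intro rev_image_eqI[of "{x,y}"]) auto
  qed
  moreover have "{Some x, Some y} \<notin> {{None, Some v} | v. v \<in> verts H}"
    by (auto simp: doubleton_eq_iff)
  ultimately show ?thesis unfolding adj_def join1_def by auto
qed

lemma adj_join1_NS: "adj (join1 H) None (Some y) \<longleftrightarrow> y \<in> verts H"
  unfolding adj_def join1_def by (auto simp: doubleton_eq_iff)

lemma adj_join1_SN: "adj (join1 H) (Some y) None \<longleftrightarrow> y \<in> verts H"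
  using adj_join1_NS adj_sym by metis

lemma adj_join1_NN: "\<not> adj (join1 H) None None"
  unfolding adj_def join1_def by auto

context
  fixes H :: "'b graph"
  assumes sH: "sg H"
begin

lemma dist_join_SS: assumes "z \<in> verts H" "y \<in> verts H"
  shows "dist (join1 H) (Some z) (Some y) = dist2 H z y"
proof -
  let ?J = "join1 H"
  define D where "D p = (case p of None \<Rightarrow> 1 | Some t \<Rightarrow> dist2 H z t)" for p
  have lip: "D q \<le> D p + 1" if "adj ?J p q" for p q
  proof (cases p; cases q)
    fix a b assume "p = Some a" "q = Some b"
    then show ?thesis using that sg.dist2_lip[OF sH, of a b z] assms by (simp add: D_def adj_join1_SS)
  qed (use that adj_join1_NN in \<open>auto simp: D_def dist2_def\<close>)
  have D0: "D (Some z) = 0" using sg.dist2_self[OF sH assms(1)] by (simp add: D_def)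
  have "\<exists>xs. walk ?J xs \<and> hd xs = Some z \<and> last xs = Some y \<and> length xs = Suc (dist2 H z y)"
  proof (cases "y = z")
    case True then show ?thesis using assms sg.dist2_self[OF sH assms(1)]
      by (intro exI[of _ "[Some z]"]) (simp add: verts_join1)
  next
    case ne: False
    show ?thesis
    proof (cases "adj H z y")
      case True then show ?thesis using assms sg.dist2_adj[OF sH True]
        by (intro exI[of _ "[Some z, Some y]"]) (simp add: verts_join1 adj_join1_SS)
    next
      case False then show ?thesis using assms sg.dist2_far[OF sH assms ne[symmetric] False]
        by (intro exI[of _ "[Some z, None, Some y]"]) (simp add: verts_join1 adj_join1_SN adj_join1_NS)
    qed
  qed
  then obtain xs where xs: "walk ?J xs" "hd xs = Some z" "last xs = Some y" "length xs = Suc (dist2 H z y)"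
    by blast
  have "dist ?J (Some z) (Some y) \<le> dist2 H z y" using dist_le[OF xs(1-3)] xs(4) by simp
  moreover have "D (Some y) \<le> dist ?J (Some z) (Some y)" using dist_ge_lip[where D=D, OF xs(1-3) D0] lip by blast
  ultimately show ?thesis by (simp add: D_def)
qed

lemma dist_join_SN: assumes "z \<in> verts H"
  shows "dist (join1 H) (Some z) None = 1"
proof -
  let ?J = "join1 H"
  define D where "D p = (if p = Some z then 0 else (1::nat))" for p
  have xs: "walk ?J [Some z, None]" using assms by (simp add: verts_join1 adj_join1_SN)
  have "dist ?J (Some z) None \<le> 1" using dist_le[OF xs] by simp
  moreover have "D None \<le> dist ?J (Some z) None"
    using dist_ge_lip[of ?J "[Some z, None]" "Some z" None D] xs by (simp add: D_def)
  ultimately show ?thesis by (simp add: D_def)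
qed

lemma dist_join_NS: assumes "z \<in> verts H"
  shows "dist (join1 H) None (Some z) = 1"
proof -
  let ?J = "join1 H"
  define D where "D p = (if p = None then 0 else (1::nat))" for p :: "'b option"
  have xs: "walk ?J [None, Some z]" using assms by (simp add: verts_join1 adj_join1_NS)
  have "dist ?J None (Some z) \<le> 1" using dist_le[OF xs] by simp
  moreover have "D (Some z) \<le> dist ?J None (Some z)"
    using dist_ge_lip[of ?J "[None, Some z]" None "Some z" D] xs by (simp add: D_def)
  ultimately show ?thesis by (simp add: D_def)
qed

end

lemma dist_lex:
  assumes sG: "sg G" and sH: "\<forall>u\<in>verts G. sg (H u)" and nb: "\<forall>u\<in>verts G. \<exists>w. adj G u w"
    and v: "v \<in> verts G" and z: "z \<in> verts (H v)" and wy: "w \<in> verts G" "y \<in> verts (H w)"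
  shows "dist (lex_prod G H) (v,z) (w,y) = (if w = v then dist2 (H v) z y else dist G v w)"
proof -
  let ?L = "lex_prod G H"
  define D where "D p = (if fst p = v then dist2 (H v) z (snd p) else dist G v (fst p))" for p :: "'a \<times> 'b"
  have hv: "sg (H v)" using sH v by auto
  have lip: "D q \<le> D p + 1" if "adj ?L p q" for p q
  proof -
    obtain a x b y' where pq: "p = (a,x)" "q = (b,y')" by (cases p, cases q) auto
    have A: "a \<in> verts G" "b \<in> verts G" "x \<in> verts (H a)" "y' \<in> verts (H b)"
      "adj G a b \<or> (a = b \<and> adj (H a) x y')"
      using that unfolding pq adj_lex by auto
    show ?thesis
    proof (cases "a = v")
      case av: True
      show ?thesis
      proof (cases "b = v")
        case True
        then have "adj (H v) x y'" using A av sg.adj_verts[OF sG] by blast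
        then show ?thesis using sg.dist2_lip[OF hv _ z] pq av True by (simp add: D_def)
      next
        case False
        then have "adj G a b" using A av by auto
        then have "dist G v b = 1" using sg.dist_adj[OF sG] av by simp
        then show ?thesis using pq av False by (simp add: D_def)
      qed
    next
      case False
      show ?thesis
      proof (cases "b = v")
        case True
        have "dist G v a \<noteq> 0" using sg.dist_0[OF sG v A(1)] False by auto
        then show ?thesis using pq False True by (simp add: D_def dist2_def)
      next
        case F2: False
        show ?thesis
        proof (cases "adj G a b")
          case True then show ?thesis using sg.dist_lip[OF sG True v] pq False F2 by (simp add: D_def)
        next
          case F3: False then have "a = b" using A by auto
          then show ?thesis using pq F2 by (simp add: D_def)
        qed
      qed
    qed
  qed
  have D0: "D (v,z) = 0" using sg.dist2_self[OF hv z] by (simp add: D_def)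
  have ex: "\<exists>xs. walk ?L xs \<and> hd xs = (v,z) \<and> last xs = (w,y) \<and> length xs = Suc (D (w,y))"
  proof (cases "w = v")
    case wv: True
    show ?thesis
    proof (cases "y = z")
      case True then show ?thesis using wv v z D0 by (intro exI[of _ "[(v,z)]"]) (simp add: verts_lex)
    next
      case ne: False
      show ?thesis
      proof (cases "adj (H v) z y")
        case True then show ?thesis using wv v z wy sg.dist2_adj[OF hv True]
          by (intro exI[of _ "[(v,z),(v,y)]"]) (simp add: verts_lex adj_lex D_def)
      next
        case False
        obtain w' where w': "adj G v w'" using nb v by auto
        have w'V: "w' \<in> verts G" "w' \<noteq> v" using sg.adj_verts[OF sG w'] by auto
        obtain y0 where y0: "y0 \<in> verts (H w')" using sg.neV[of "H w'"] sH w'V by auto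
        have yv: "y \<in> verts (H v)" using wy wv by simp
        have "dist2 (H v) z y = 2" using sg.dist2_far[OF hv z yv ne[symmetric] False] by simp
        then show ?thesis using wv v z yv w' w'V y0 adj_sym[of G v w']
          by (intro exI[of _ "[(v,z),(w',y0),(v,y)]"]) (simp add: verts_lex adj_lex D_def)
      qed
    qed
  next
    case False
    obtain ws where ws: "walk G ws" "hd ws = v" "last ws = w" "length ws = Suc (dist G v w)"
      using sg.dist_walk[OF sG v wy(1)] by blast
    define g where "g a = (a, if a = v then z else if a = w then y else (SOME t. t \<in> verts (H a)))" for a
    have gV: "g a \<in> verts ?L" if "a \<in> verts G" for a
    proof -
      have "verts (H a) \<noteq> {}" using sg.neV sH that by auto
      then have "(SOME t. t \<in> verts (H a)) \<in> verts (H a)" by (simp add: some_in_eq)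
      then show ?thesis using that z wy by (auto simp: g_def verts_lex)
    qed
    have gadj: "adj ?L (g a) (g b)" if "adj G a b" "a \<in> verts G" "b \<in> verts G" for a b
    proof -
      obtain ca cb where "g a = (a, ca)" "g b = (b, cb)" by (simp add: g_def)
      then show ?thesis using gV[OF that(2)] gV[OF that(3)] that by (simp add: adj_lex verts_lex)
    qed
    have wl: "walk ?L (map g ws)" using walk_map[OF ws(1), of g ?L] gV gadj by blast
    have ne: "ws \<noteq> []" using walk_nonempty[OF ws(1)] .
    have "hd (map g ws) = (v,z)" "last (map g ws) = (w,y)"
      using ne ws False by (simp_all add: hd_map last_map g_def)
    then show ?thesis using wl ws False by (intro exI[of _ "map g ws"]) (simp add: D_def)
  qed
  then obtain xs where xs: "walk ?L xs" "hd xs = (v,z)" "last xs = (w,y)" "length xs = Suc (D (w,y))"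
    by blast
  have "dist ?L (v,z) (w,y) \<le> D (w,y)" using dist_le[OF xs(1-3)] xs(4) by simp
  moreover have "D (w,y) \<le> dist ?L (v,z) (w,y)" using dist_ge_lip[where D=D, OF xs(1-3) D0] lip by blast
  ultimately have "dist ?L (v,z) (w,y) = D (w,y)" by simp
  then show ?thesis by (simp add: D_def)
qed

theorem corollary5:
  fixes G :: "'a graph" and H :: "'a \<Rightarrow> 'b graph"
  assumes "simple_graph G" and "connected G" and "card (verts G) \<ge> 2"
    and "\<forall>u\<in>verts G. simple_graph (H u) \<and> connected (H u) \<and>
           (radius (H u) \<ge> 4 \<or> (\<not> is_tree (H u) \<and> girth (H u) \<ge> 7))"
  shows "dim_l (lex_prod G H) = (\<Sum>u\<in>verts G. dim_l (join1 (H u))) \<and>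
         (\<Sum>u\<in>verts G. dim_l (join1 (H u))) = (\<Sum>u\<in>verts G. adim_l (H u))"
proof -
  let ?L = "lex_prod G H"
  have sG: "sg G" using assms(1,2) by (simp add: sg_def)
  have sH: "\<forall>u\<in>verts G. sg (H u)" using assms(4) by (simp add: sg_def)
  have condH: "\<And>u. u \<in> verts G \<Longrightarrow> radius (H u) \<ge> 4 \<or> (\<not> is_tree (H u) \<and> girth (H u) \<ge> 7)"
    using assms(4) by blast
  have finG: "finite (verts G)" using sg.finV[OF sG] .
  have nb: "\<forall>u\<in>verts G. \<exists>w. adj G u w"
  proof
    fix u assume u: "u \<in> verts G"
    have "\<not> verts G \<subseteq> {u}"
    proof
      assume "verts G \<subseteq> {u}"
      then have "card (verts G) \<le> card {u}" by (intro card_mono) auto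
      then show False using assms(3) by simp
    qed
    then obtain w where w: "w \<in> verts G" "w \<noteq> u" by auto
    obtain xs where xs: "walk G xs" "hd xs = w" "last xs = u" using sg.walk_ex[OF sG w(1) u] by blast
    have "length xs \<ge> 2"
    proof (rule ccontr)
      assume "\<not> length xs \<ge> 2"
      then obtain a where "xs = [a]" using walk_nonempty[OF xs(1)]
        by (cases xs; cases "tl xs") auto
      then show False using xs w by simp
    qed
    then have "adj G (last (butlast xs)) u" using walk_butlast[OF xs(1)] xs by simp
    then show "\<exists>w. adj G u w" using adj_sym by metis
  qed
  have exB: "\<exists>S. local_gen (dist2 (H u)) (H u) S \<and> card S = adim_l (H u)" if u: "u \<in> verts G" for u
  proof -
    have hu: "sg (H u)" using sH u by auto
    have "local_gen (dist2 (H u)) (H u) (verts (H u))"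
      unfolding local_gen_def
    proof (intro conjI ballI impI)
      fix x y assume "x \<in> verts (H u)" "y \<in> verts (H u)" "adj (H u) x y"
      then show "\<exists>s\<in>verts (H u). dist2 (H u) s x \<noteq> dist2 (H u) s y"
        using sg.dist2_self[OF hu] sg.dist2_adj[OF hu] by (intro bexI[of _ x]) auto
    qed simp
    then have "\<exists>k S. local_gen (dist2 (H u)) (H u) S \<and> card S = k" by blast
    then show ?thesis unfolding adim_l_def by (rule LeastI_ex)
  qed
  then obtain B where B: "\<And>u. u \<in> verts G \<Longrightarrow> local_gen (dist2 (H u)) (H u) (B u) \<and> card (B u) = adim_l (H u)"
    by metis
  have BV: "\<And>u. u \<in> verts G \<Longrightarrow> B u \<subseteq> verts (H u)" using B by (simp add: local_gen_def)
  have join_eq: "dim_l (join1 (H u)) = adim_l (H u)" if u: "u \<in> verts G" for u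
  proof -
    let ?J = "join1 (H u)"
    have hu: "sg (H u)" using sH u by auto
    have Bu: "local_gen (dist2 (H u)) (H u) (B u)" "card (B u) = adim_l (H u)" using B u by auto
    have gen1: "local_gen (dist ?J) ?J (Some ` B u)"
      unfolding local_gen_def
    proof (intro conjI ballI impI)
      show "Some ` B u \<subseteq> verts ?J" using BV u by (auto simp: verts_join1)
      fix p q assume p: "p \<in> verts ?J" and q: "q \<in> verts ?J" and pq: "adj ?J p q"
      show "\<exists>s\<in>Some ` B u. dist ?J s p \<noteq> dist ?J s q"
      proof (cases p)
        case None
        then obtain y where qy: "q = Some y" using pq adj_join1_NN by (cases q) auto
        have yV: "y \<in> verts (H u)" using q qy by (auto simp: verts_join1)
        obtain z where z: "z \<in> B u" "\<not> adj (H u) y z" using sg.KL[OF hu condH[OF u] Bu(1) yV] by blast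
        have zV: "z \<in> verts (H u)" using z BV u by auto
        have "dist ?J (Some z) None \<noteq> dist ?J (Some z) (Some y)"
          using dist_join_SN[OF hu zV] dist_join_SS[OF hu zV yV] sg.dist2_neq1[OF hu zV yV z(2)] by simp
        then show ?thesis using None qy z by blast
      next
        case (Some x)
        have xV: "x \<in> verts (H u)" using p Some by (auto simp: verts_join1)
        show ?thesis
        proof (cases q)
          case None
          obtain z where z: "z \<in> B u" "\<not> adj (H u) x z" using sg.KL[OF hu condH[OF u] Bu(1) xV] by blast
          have zV: "z \<in> verts (H u)" using z BV u by auto
          have "dist ?J (Some z) (Some x) \<noteq> dist ?J (Some z) None"
            using dist_join_SN[OF hu zV] dist_join_SS[OF hu zV xV] sg.dist2_neq1[OF hu zV xV z(2)] by simp
          then show ?thesis using None Some z by blast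
        next
          case (Some y)
          have yV: "y \<in> verts (H u)" using q Some by (auto simp: verts_join1)
          have "adj (H u) x y" using pq Some \<open>p = Some x\<close> adj_join1_SS by metis
          then obtain z where z: "z \<in> B u" "dist2 (H u) z x \<noteq> dist2 (H u) z y"
            using Bu(1) xV yV unfolding local_gen_def by blast
          have zV: "z \<in> verts (H u)" using z BV u by auto
          show ?thesis using z dist_join_SS[OF hu zV xV] dist_join_SS[OF hu zV yV] Some \<open>p = Some x\<close>
            by (intro bexI[of _ "Some z"]) auto
        qed
      qed
    qed
    have le: "dim_l ?J \<le> adim_l (H u)"
    proof -
      have "card (Some ` B u) = adim_l (H u)" using Bu(2) by (simp add: card_image)
      then show ?thesis unfolding dim_l_def using gen1 by (intro Least_le) blast
    qed
    have "\<exists>k S. local_gen (dist ?J) ?J S \<and> card S = k" using gen1 by blast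
    then have "\<exists>S. local_gen (dist ?J) ?J S \<and> card S = dim_l ?J" unfolding dim_l_def by (rule LeastI_ex)
    then obtain S0 where S0: "local_gen (dist ?J) ?J S0" "card S0 = dim_l ?J" by blast
    define S' where "S' = {z. Some z \<in> S0}"
    have finJ: "finite (verts ?J)" using sg.finV[OF hu] by (simp add: verts_join1)
    have finS0: "finite S0" using S0(1) finJ by (auto simp: local_gen_def intro: finite_subset)
    have genS': "local_gen (dist2 (H u)) (H u) S'"
      unfolding local_gen_def
    proof (intro conjI ballI impI)
      show "S' \<subseteq> verts (H u)" using S0(1) by (auto simp: S'_def local_gen_def verts_join1)
      fix x y assume xV: "x \<in> verts (H u)" and yV: "y \<in> verts (H u)" and xy: "adj (H u) x y"
      have "adj ?J (Some x) (Some y)" using xy adj_join1_SS by metis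
      moreover have "Some x \<in> verts ?J" "Some y \<in> verts ?J" using xV yV by (auto simp: verts_join1)
      ultimately obtain s where s: "s \<in> S0" "dist ?J s (Some x) \<noteq> dist ?J s (Some y)"
        using S0(1) unfolding local_gen_def by blast
      show "\<exists>s\<in>S'. dist2 (H u) s x \<noteq> dist2 (H u) s y"
      proof (cases s)
        case None then show ?thesis using s dist_join_NS[OF hu xV] dist_join_NS[OF hu yV] by simp
      next
        case (Some z)
        have zV: "z \<in> verts (H u)" using s Some S0(1) by (auto simp: local_gen_def verts_join1)
        show ?thesis using s Some dist_join_SS[OF hu zV xV] dist_join_SS[OF hu zV yV]
          by (intro bexI[of _ z]) (auto simp: S'_def)
      qed
    qed
    have "adim_l (H u) \<le> card S'" unfolding adim_l_def using genS' by (intro Least_le) blast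
    also have "card S' = card (Some ` S')" by (simp add: card_image)
    also have "\<dots> \<le> card S0" using finS0 by (intro card_mono) (auto simp: S'_def)
    finally show ?thesis using le S0(2) by simp
  qed
  define SB where "SB = Sigma (verts G) B"
  have genL: "local_gen (dist ?L) ?L SB"
    unfolding local_gen_def
  proof (intro conjI ballI impI)
    show "SB \<subseteq> verts ?L" using BV by (auto simp: SB_def verts_lex)
    fix p q assume p: "p \<in> verts ?L" and q: "q \<in> verts ?L" and pq: "adj ?L p q"
    obtain a x b y where ab: "p = (a,x)" "q = (b,y)" by (cases p, cases q) auto
    have A: "a \<in> verts G" "b \<in> verts G" "x \<in> verts (H a)" "y \<in> verts (H b)"
      "adj G a b \<or> (a = b \<and> adj (H a) x y)" using pq unfolding ab adj_lex by auto
    have ha: "sg (H a)" using sH A by auto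
    show "\<exists>s\<in>SB. dist ?L s p \<noteq> dist ?L s q"
    proof (cases "adj G a b")
      case True
      have ne: "b \<noteq> a" using sg.adj_verts[OF sG True] by auto
      obtain z where z: "z \<in> B a" "\<not> adj (H a) x z" using sg.KL[OF ha condH[OF A(1)] _ A(3)] B A(1) by blast
      have zV: "z \<in> verts (H a)" using z BV A by auto
      have "dist ?L (a,z) (a,x) = dist2 (H a) z x" using dist_lex[OF sG sH nb A(1) zV A(1) A(3)] by simp
      moreover have "dist ?L (a,z) (b,y) = 1"
        using dist_lex[OF sG sH nb A(1) zV A(2) A(4)] ne sg.dist_adj[OF sG True] by simp
      ultimately have "dist ?L (a,z) p \<noteq> dist ?L (a,z) q"
        using sg.dist2_neq1[OF ha zV A(3) z(2)] ab by simp
      then show ?thesis using z A(1) by (auto simp: SB_def)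
    next
      case False
      then have ba: "b = a" "adj (H a) x y" using A by auto
      obtain z where z: "z \<in> B a" "dist2 (H a) z x \<noteq> dist2 (H a) z y"
        using B[OF A(1)] A ba unfolding local_gen_def by blast
      have zV: "z \<in> verts (H a)" using z BV A by auto
      have "dist ?L (a,z) p \<noteq> dist ?L (a,z) q"
        using dist_lex[OF sG sH nb A(1) zV A(1) A(3)] dist_lex[OF sG sH nb A(1) zV A(2) A(4)] ab ba z
        by simp
      then show ?thesis using z A(1) by (auto simp: SB_def)
    qed
  qed
  have finB: "\<And>u. u \<in> verts G \<Longrightarrow> finite (B u)"
    using BV sH sg.finV finite_subset by metis
  have cardSB: "card SB = (\<Sum>u\<in>verts G. adim_l (H u))"
    unfolding SB_def using finG finB B by (simp add: card_SigmaI)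
  have leL: "dim_l ?L \<le> (\<Sum>u\<in>verts G. adim_l (H u))"
    unfolding dim_l_def using genL cardSB by (intro Least_le) blast
  have "\<exists>k S. local_gen (dist ?L) ?L S \<and> card S = k" using genL by blast
  then have "\<exists>S. local_gen (dist ?L) ?L S \<and> card S = dim_l ?L" unfolding dim_l_def by (rule LeastI_ex)
  then obtain S0 where S0: "local_gen (dist ?L) ?L S0" "card S0 = dim_l ?L" by blast
  define T where "T u = {z. (u,z) \<in> S0}" for u
  have S0sub: "S0 \<subseteq> verts ?L" using S0(1) by (simp add: local_gen_def)
  have S0eq: "S0 = Sigma (verts G) T" using S0sub by (auto simp: T_def verts_lex)
  have finT: "\<And>u. u \<in> verts G \<Longrightarrow> finite (T u)"
  proof -
    fix u assume u: "u \<in> verts G"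
    have "T u \<subseteq> verts (H u)" using S0sub by (auto simp: T_def verts_lex)
    then show "finite (T u)" using sH u sg.finV finite_subset by metis
  qed
  have genT: "local_gen (dist2 (H u)) (H u) (T u)" if u: "u \<in> verts G" for u
    unfolding local_gen_def
  proof (intro conjI ballI impI)
    show "T u \<subseteq> verts (H u)" using S0sub by (auto simp: T_def verts_lex)
    fix x y assume xV: "x \<in> verts (H u)" and yV: "y \<in> verts (H u)" and xy: "adj (H u) x y"
    have "adj ?L (u,x) (u,y)" using xy xV yV u by (simp add: adj_lex)
    moreover have "(u,x) \<in> verts ?L" "(u,y) \<in> verts ?L" using xV yV u by (auto simp: verts_lex)
    ultimately obtain s where s: "s \<in> S0" "dist ?L s (u,x) \<noteq> dist ?L s (u,y)"
      using S0(1) unfolding local_gen_def by blast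
    obtain v z where vz: "s = (v,z)" by (cases s) auto
    have vV: "v \<in> verts G" "z \<in> verts (H v)" using s vz S0sub by (auto simp: verts_lex)
    have d1: "dist ?L (v,z) (u,x) = (if u = v then dist2 (H v) z x else dist G v u)"
      using dist_lex[OF sG sH nb vV u, of x] xV by simp
    have d2: "dist ?L (v,z) (u,y) = (if u = v then dist2 (H v) z y else dist G v u)"
      using dist_lex[OF sG sH nb vV u, of y] yV by simp
    have "u = v" using s vz d1 d2 by (cases "u = v") auto
    then show "\<exists>s\<in>T u. dist2 (H u) s x \<noteq> dist2 (H u) s y"
      using s vz d1 d2 by (intro bexI[of _ z]) (auto simp: T_def)
  qed
  have "(\<Sum>u\<in>verts G. adim_l (H u)) \<le> (\<Sum>u\<in>verts G. card (T u))"
  proof (rule sum_mono)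
    fix u assume u: "u \<in> verts G"
    show "adim_l (H u) \<le> card (T u)" unfolding adim_l_def using genT[OF u] by (intro Least_le) blast
  qed
  also have "\<dots> = card S0" using S0eq finG finT by (simp add: card_SigmaI)
  finally have geL: "(\<Sum>u\<in>verts G. adim_l (H u)) \<le> dim_l ?L" using S0(2) by simp
  have sj: "(\<Sum>u\<in>verts G. dim_l (join1 (H u))) = (\<Sum>u\<in>verts G. adim_l (H u))"
    using join_eq by (intro sum.cong) auto
  show ?thesis using leL geL sj by simp
qed

end
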